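(* Suppose $N>n$ and let $(F,G)\in\mathcal R^{(1)}$. Then $r^{(2)}_{F,G}=\frac nN+\sqrt{\frac{n(N-n)}{N^2(N-1)}}$ if and only if $(F,G)$ is $2$-uniform.
   Context: $\mathcal H$ is a complex Hilbert space of finite dimension $n$, inner product linear in the first argument. A finite sequence $F=\{f_i\}_{i=1}^N$ is a frame if there are $0<A\le B$ with $A\|f\|^2\le\sum_i|\langle f,f_i\rangle|^2\le B\|f\|^2$ for all $f$. $G=\{g_i\}_{i=1}^N$ is a dual of $F$ if $f=\sum_i\langle f,g_i\rangle f_i$ for all $f$; $(F,G)$ is then an $(N,n)$ dual pair. A dual pair is $1$-uniform if $\langle f_i,g_i\rangle$ is independent of $i$, and $2$-uniform if it is $1$-uniform and $\langle f_i,g_j\rangle\langle f_j,g_i\rangle$ is the same constant for all $i\ne j$. $\mathcal A_m$ is the set of $m$-element subsets of $\{1,\dots,N\}$; $E_{\Lambda,F,G}f=\sum_{i\in\Lambda}\langle f,f_i\rangle g_i$; $\rho$ is spectral radius; $r^{(m)}_{F,G}=\max_{\Lambda\in\mathcal A_m}\rho(E_{\Lambda,F,G})$; $r^{(1)}=\inf\{r^{(1)}_{F,G}:(F,G)\text{ an }(N,n)\text{ dual pair}\}$; $\mathcal R^{(1)}=\{(F,G):r^{(1)}_{F,G}=r^{(1)}\}$. *)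

theory Defs
  imports "Jordan_Normal_Form.Spectral_Radius"
begin

text \<open>Hilbert space = complex vectors of dimension n (carrier_vec n); inner product
  linear in the first argument.\<close>
definition ip :: "complex vec \<Rightarrow> complex vec \<Rightarrow> complex" where
  "ip f g = (\<Sum>k<dim_vec f. f $ k * cnj (g $ k))"

definition is_frame :: "nat \<Rightarrow> nat \<Rightarrow> (nat \<Rightarrow> complex vec) \<Rightarrow> bool" where
  "is_frame n N F \<longleftrightarrow> (\<forall>i<N. F i \<in> carrier_vec n) \<and>
     (\<exists>A B::real. 0 < A \<and> A \<le> B \<and>
        (\<forall>f\<in>carrier_vec n. A * (cmod (ip f f)) \<le> (\<Sum>i<N. (cmod (ip f (F i)))\<^sup>2) \<and>
                            (\<Sum>i<N. (cmod (ip f (F i)))\<^sup>2) \<le> B * (cmod (ip f f))))"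

definition dual_pair :: "nat \<Rightarrow> nat \<Rightarrow> (nat \<Rightarrow> complex vec) \<Rightarrow> (nat \<Rightarrow> complex vec) \<Rightarrow> bool" where
  "dual_pair n N F G \<longleftrightarrow> is_frame n N F \<and> (\<forall>i<N. G i \<in> carrier_vec n) \<and>
     (\<forall>f\<in>carrier_vec n. f = finsum_vec TYPE(complex) n (\<lambda>i. ip f (G i) \<cdot>\<^sub>v F i) {..<N})"

text \<open>Matrix of E_{\<Lambda>,F,G} f = sum_{i in \<Lambda>} <f,f_i> g_i.\<close>
definition E_op :: "nat \<Rightarrow> nat set \<Rightarrow> (nat \<Rightarrow> complex vec) \<Rightarrow> (nat \<Rightarrow> complex vec) \<Rightarrow> complex mat" where
  "E_op n \<Lambda> F G = mat n n (\<lambda>(j,k). \<Sum>i\<in>\<Lambda>. G i $ j * cnj (F i $ k))"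

definition subsets_m :: "nat \<Rightarrow> nat \<Rightarrow> nat set set" where
  "subsets_m N m = {\<Lambda>. \<Lambda> \<subseteq> {..<N} \<and> card \<Lambda> = m}"

definition r_m :: "nat \<Rightarrow> nat \<Rightarrow> nat \<Rightarrow> (nat \<Rightarrow> complex vec) \<Rightarrow> (nat \<Rightarrow> complex vec) \<Rightarrow> real" where
  "r_m m n N F G = Max ((\<lambda>\<Lambda>. spectral_radius (E_op n \<Lambda> F G)) ` subsets_m N m)"

definition r1_inf :: "nat \<Rightarrow> nat \<Rightarrow> real" where
  "r1_inf n N = Inf {r_m 1 n N F G | F G. dual_pair n N F G}"

definition R1 :: "nat \<Rightarrow> nat \<Rightarrow> ((nat \<Rightarrow> complex vec) \<times> (nat \<Rightarrow> complex vec)) set" where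
  "R1 n N = {(F, G). dual_pair n N F G \<and> r_m 1 n N F G = r1_inf n N}"

definition one_uniform :: "nat \<Rightarrow> (nat \<Rightarrow> complex vec) \<Rightarrow> (nat \<Rightarrow> complex vec) \<Rightarrow> bool" where
  "one_uniform N F G \<longleftrightarrow> (\<exists>c. \<forall>i<N. ip (F i) (G i) = c)"

definition two_uniform :: "nat \<Rightarrow> (nat \<Rightarrow> complex vec) \<Rightarrow> (nat \<Rightarrow> complex vec) \<Rightarrow> bool" where
  "two_uniform N F G \<longleftrightarrow> one_uniform N F G \<and>
     (\<exists>d. \<forall>i<N. \<forall>j<N. i \<noteq> j \<longrightarrow> ip (F i) (G j) * ip (F j) (G i) = d)"

end

theory Submission
  imports Defs
begin


lemma root_sum: assumes m: "(m::int) \<noteq> 0" "\<bar>m\<bar> < int N"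
  shows "(\<Sum>i<N. cis (2*pi*real i * of_int m / real N)) = 0"
proof -
  have N: "N > 0" using m by linarith
  define z where "z = cis (2*pi*of_int m / real N)"
  have zi: "cis (2*pi*real i * of_int m / real N) = z ^ i" for i
    unfolding z_def DeMoivre by (simp add: algebra_simps)
  have z1: "z \<noteq> 1"
  proof
    assume "z = 1"
    hence "cos (2*pi*of_int m / real N) = 1" unfolding z_def by (metis complex.sel(1) cis.sel(1) one_complex.sel(1))
    then obtain k :: int where k: "2*pi*of_int m / real N = real_of_int k * 2 * pi" using cos_one_2pi_int by blast
    hence "real_of_int m = real_of_int k * real N" using N by (simp add: field_simps)
    hence "m = k * int N" by (metis of_int_eq_iff of_int_mult of_int_of_nat_eq)
    hence ma: "\<bar>m\<bar> = \<bar>k\<bar> * int N" by (simp add: abs_mult)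
    have "k \<noteq> 0" using m \<open>m = k * int N\<close> by auto
    hence "1 \<le> \<bar>k\<bar>" by auto
    from mult_right_mono[OF this, of "int N"] have "int N \<le> \<bar>m\<bar>" using ma by simp
    thus False using m by simp
  qed
  have zN: "z ^ N = 1" unfolding z_def DeMoivre using N by simp
  show ?thesis unfolding zi using geometric_sum[OF z1, of N] zN by simp
qed

definition phi :: "nat \<Rightarrow> nat \<Rightarrow> nat \<Rightarrow> complex" where
  "phi N i k = cis (2*pi*real i * real k / real N) / complex_of_real (sqrt (real N))"

lemma phi_orth: assumes k: "k < N" and l: "l < N"
  shows "(\<Sum>i<N. phi N i l * cnj (phi N i k)) = (if l = k then 1 else 0)"
proof -
  have N: "N > 0" using k by auto
  have sq: "(complex_of_real (sqrt (real N)))^2 = of_nat N"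
    by (metis of_real_power of_real_of_nat_eq of_nat_0_le_iff real_sqrt_pow2)
  have "phi N i l * cnj (phi N i k) = cis (2*pi*real i * of_int (int l - int k) / real N) / of_nat N" for i
  proof -
    have "phi N i l * cnj (phi N i k) = cis (2*pi*real i * real l / real N) * cis (- (2*pi*real i * real k / real N)) / (complex_of_real (sqrt (real N)))^2"
      unfolding phi_def by (simp add: cis_cnj power2_eq_square)
    also have "\<dots> = cis (2*pi*real i * of_int (int l - int k) / real N) / of_nat N"
      unfolding sq by (simp add: cis_mult diff_divide_distrib algebra_simps)
    finally show ?thesis .
  qed
  hence "(\<Sum>i<N. phi N i l * cnj (phi N i k)) = (\<Sum>i<N. cis (2*pi*real i * of_int (int l - int k) / real N)) / of_nat N"
    by (simp add: sum_divide_distrib)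
  also have "\<dots> = (if l = k then 1 else 0)"
  proof (cases "l = k")
    case True thus ?thesis using N by simp
  next
    case False
    have "(\<Sum>i<N. cis (2*pi*real i * of_int (int l - int k) / real N)) = 0"
      by (rule root_sum) (use False k l in auto)
    thus ?thesis using False by simp
  qed
  finally show ?thesis .
qed

lemma orth_dual: assumes c: "\<And>i. i < N \<Longrightarrow> P i \<in> carrier_vec n"
  and o: "\<And>k l. k < n \<Longrightarrow> l < n \<Longrightarrow> (\<Sum>i<N. P i $ l * cnj (P i $ k)) = (if l = k then 1 else 0)"
  shows "dual_pair n N P P"
proof -
  have dim: "\<And>i. i < N \<Longrightarrow> dim_vec (P i) = n" using c by auto
  have key: "(\<Sum>i<N. ip f (P i) * P i $ k) = f $ k" if f: "f \<in> carrier_vec n" and k: "k < n" for f k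
  proof -
    have "(\<Sum>i<N. ip f (P i) * P i $ k) = (\<Sum>i<N. \<Sum>l<n. f $ l * (P i $ k * cnj (P i $ l)))"
      using f by (intro sum.cong refl) (simp add: ip_def sum_distrib_right sum_distrib_left algebra_simps)
    also have "\<dots> = (\<Sum>l<n. f $ l * (\<Sum>i<N. P i $ k * cnj (P i $ l)))"
      by (subst sum.swap) (simp add: sum_distrib_left)
    also have "\<dots> = (\<Sum>l<n. if l = k then f $ l else 0)"
      by (intro sum.cong refl) (simp add: o k)
    also have "\<dots> = f $ k" using k by (simp add: sum.delta)
    finally show ?thesis .
  qed
  have dual: "f = finsum_vec TYPE(complex) n (\<lambda>i. ip f (P i) \<cdot>\<^sub>v P i) {..<N}" if f: "f \<in> carrier_vec n" for f
  proof (rule eq_vecI)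
    show "dim_vec f = dim_vec (finsum_vec TYPE(complex) n (\<lambda>i. ip f (P i) \<cdot>\<^sub>v P i) {..<N})"
      using f c by (subst carrier_vecD[OF finsum_vec_closed]) auto
    fix k assume "k < dim_vec (finsum_vec TYPE(complex) n (\<lambda>i. ip f (P i) \<cdot>\<^sub>v P i) {..<N})"
    hence k: "k < n" using f c by (subst (asm) carrier_vecD[OF finsum_vec_closed]) auto
    have "finsum_vec TYPE(complex) n (\<lambda>i. ip f (P i) \<cdot>\<^sub>v P i) {..<N} $ k = (\<Sum>i<N. (ip f (P i) \<cdot>\<^sub>v P i) $ k)"
      by (rule index_finsum_vec) (use k c in auto)
    also have "\<dots> = (\<Sum>i<N. ip f (P i) * P i $ k)" using dim k by (intro sum.cong) auto
    finally show "f $ k = finsum_vec TYPE(complex) n (\<lambda>i. ip f (P i) \<cdot>\<^sub>v P i) {..<N} $ k"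
      using key[OF f k] by simp
  qed
  have pars: "(\<Sum>i<N. (cmod (ip f (P i)))\<^sup>2) = cmod (ip f f)" if f: "f \<in> carrier_vec n" for f
  proof -
    have "complex_of_real (\<Sum>i<N. (cmod (ip f (P i)))\<^sup>2) = (\<Sum>i<N. ip f (P i) * cnj (ip f (P i)))"
      by (simp only: of_real_sum complex_norm_square)
    also have "\<dots> = (\<Sum>i<N. \<Sum>k<n. f $ k * cnj (P i $ k) * cnj (ip f (P i)))"
      using f by (intro sum.cong refl) (simp add: ip_def sum_distrib_right)
    also have "\<dots> = (\<Sum>k<n. \<Sum>i<N. f $ k * cnj (ip f (P i) * P i $ k))"
      by (subst sum.swap) (simp add: algebra_simps)
    also have "\<dots> = (\<Sum>k<n. f $ k * cnj (\<Sum>i<N. ip f (P i) * P i $ k))"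
      by (simp add: sum_distrib_left)
    also have "\<dots> = (\<Sum>k<n. f $ k * cnj (f $ k))" by (intro sum.cong refl) (simp add: key[OF f])
    also have "\<dots> = ip f f" using f by (simp add: ip_def)
    finally have e: "complex_of_real (\<Sum>i<N. (cmod (ip f (P i)))\<^sup>2) = ip f f" .
    have "cmod (ip f f) = \<bar>\<Sum>i<N. (cmod (ip f (P i)))\<^sup>2\<bar>" unfolding e[symmetric] by (rule norm_of_real)
    thus ?thesis by (simp add: sum_nonneg)
  qed
  show ?thesis unfolding dual_pair_def is_frame_def
    using c dual pars by (auto intro!: exI[of _ "1::real"])
qed

lemma phi_dual: assumes "n \<le> N"
  shows "dual_pair n N (\<lambda>i. vec n (phi N i)) (\<lambda>i. vec n (phi N i))"
  by (rule orth_dual) (use assms phi_orth in auto)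

lemma phi_diag: assumes "n \<le> N" "0 < N"
  shows "ip (vec n (phi N i)) (vec n (phi N i)) = of_nat n / of_nat N"
proof -
  have sq: "(complex_of_real (sqrt (real N)))^2 = of_nat N"
    by (metis of_real_power of_real_of_nat_eq of_nat_0_le_iff real_sqrt_pow2)
  have "phi N i k * cnj (phi N i k) = 1 / of_nat N" for k
    unfolding phi_def by (simp add: cis_cnj cis_mult power2_eq_square[symmetric] sq)
  thus ?thesis by (simp add: ip_def)
qed



lemma ip_add: "f \<in> carrier_vec n \<Longrightarrow> g \<in> carrier_vec n \<Longrightarrow> h \<in> carrier_vec n \<Longrightarrow>
  ip (f + g) h = ip f h + ip g h"
  unfolding ip_def by (simp add: sum.distrib algebra_simps)

lemma ip_smult: "f \<in> carrier_vec n \<Longrightarrow> ip (a \<cdot>\<^sub>v f) h = a * ip f h"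
  unfolding ip_def by (simp add: sum_distrib_left algebra_simps)

lemma ip_zero: "ip (0\<^sub>v n) h = 0"
  unfolding ip_def by simp

lemma Eop_mult: assumes "v \<in> carrier_vec n" "\<forall>i\<in>L. F i \<in> carrier_vec n"
  shows "E_op n L F G *\<^sub>v v = vec n (\<lambda>p. \<Sum>i\<in>L. ip v (F i) * G i $ p)"
proof (rule eq_vecI)
  fix p assume p: "p < dim_vec (vec n (\<lambda>p. \<Sum>i\<in>L. ip v (F i) * G i $ p))"
  hence pn: "p < n" by simp
  have "(E_op n L F G *\<^sub>v v) $ p = (\<Sum>q<n. (\<Sum>i\<in>L. G i $ p * cnj (F i $ q)) * v $ q)"
    using pn assms(1) unfolding E_op_def by (simp add: scalar_prod_def lessThan_atLeast0)
  also have "\<dots> = (\<Sum>i\<in>L. (\<Sum>q<n. v $ q * cnj (F i $ q)) * G i $ p)"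
    by (simp add: sum_distrib_left sum_distrib_right algebra_simps sum.swap[of _ L])
  also have "\<dots> = (\<Sum>i\<in>L. ip v (F i) * G i $ p)" using assms(1) by (simp add: ip_def)
  finally show "(E_op n L F G *\<^sub>v v) $ p = vec n (\<lambda>p. \<Sum>i\<in>L. ip v (F i) * G i $ p) $ p"
    using pn by simp
qed (simp add: E_op_def)

lemma sr_char: assumes A: "A \<in> carrier_mat n n" and n: "n>0" and S: "finite S"
  and ch: "\<And>l. l \<noteq> 0 \<Longrightarrow> (eigenvalue A l \<longleftrightarrow> l \<in> S)"
  shows "spectral_radius A = Max (norm ` insert 0 S)"
proof (rule antisym)
  have ne: "spectrum A \<noteq> {}" by (rule spectrum_non_empty[OF A n])
  have fin: "finite (spectrum A)" by (rule card_finite_spectrum[OF A])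
  obtain l0 where l0: "l0 \<in> spectrum A" using ne by auto
  have sr: "spectral_radius A = Max (norm ` spectrum A)" by (simp add: spectral_radius_def)
  show "spectral_radius A \<le> Max (norm ` insert 0 S)" unfolding sr
  proof (rule Max.boundedI)
    fix x assume "x \<in> norm ` spectrum A"
    then obtain l where l: "l \<in> spectrum A" "x = norm l" by auto
    show "x \<le> Max (norm ` insert 0 S)"
    proof (cases "l = 0")
      case True thus ?thesis using l S by (intro Max_ge) auto
    next
      case False thus ?thesis using l S ch[OF False] by (intro Max_ge) (auto simp: spectrum_def)
    qed
  qed (use fin ne in auto)
  show "Max (norm ` insert 0 S) \<le> spectral_radius A" unfolding sr
  proof (rule Max.boundedI)
    fix x assume "x \<in> norm ` insert 0 S"
    then obtain l where l: "l \<in> insert 0 S" "x = norm l" by auto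
    show "x \<le> Max (norm ` spectrum A)"
    proof (cases "l = 0")
      case True
      have "norm l0 \<le> Max (norm ` spectrum A)" using l0 fin by (intro Max_ge) auto
      thus ?thesis using True l by (smt (verit) norm_ge_zero norm_zero)
    next
      case False thus ?thesis using l fin ch[OF False] by (intro Max_ge) (auto simp: spectrum_def)
    qed
  qed (use S in auto)
qed

lemma Eop_carrier: "E_op n L F G \<in> carrier_mat n n" by (simp add: E_op_def)

lemma eig_single: assumes F: "F i \<in> carrier_vec n" and G: "G i \<in> carrier_vec n" and l: "l \<noteq> 0"
  shows "eigenvalue (E_op n {i} F G) l \<longleftrightarrow> l = ip (G i) (F i)"
proof
  assume "eigenvalue (E_op n {i} F G) l"
  then obtain v where v: "v \<in> carrier_vec n" "v \<noteq> 0\<^sub>v n" "E_op n {i} F G *\<^sub>v v = l \<cdot>\<^sub>v v"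
    unfolding eigenvalue_def eigenvector_def by (auto simp: E_op_def)
  have "ip v (F i) \<cdot>\<^sub>v G i = E_op n {i} F G *\<^sub>v v"
    by (subst Eop_mult[OF v(1)]) (use F G in \<open>auto intro!: eq_vecI\<close>)
  hence eq: "ip v (F i) \<cdot>\<^sub>v G i = l \<cdot>\<^sub>v v" using v(3) by simp
  have "ip v (F i) \<noteq> 0"
  proof
    assume "ip v (F i) = 0"
    have z: "0 \<cdot>\<^sub>v G i = 0\<^sub>v n" using G by (auto intro!: eq_vecI)
    have "l \<cdot>\<^sub>v v = 0\<^sub>v n" using eq z \<open>ip v (F i) = 0\<close> by simp
    hence "\<And>k. k < n \<Longrightarrow> l * v $ k = 0" by (metis index_smult_vec(1) index_zero_vec(1) v(1) carrier_vecD)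
    hence "v = 0\<^sub>v n" using l v(1) by (auto intro!: eq_vecI)
    thus False using v by auto
  qed
  moreover have "ip v (F i) * ip (G i) (F i) = l * ip v (F i)"
    using arg_cong[OF eq, of "\<lambda>x. ip x (F i)"] ip_smult G v(1) by metis
  ultimately show "l = ip (G i) (F i)" by simp
next
  assume a: "l = ip (G i) (F i)"
  have "G i \<noteq> 0\<^sub>v n" using a l ip_zero by metis
  moreover have "E_op n {i} F G *\<^sub>v G i = l \<cdot>\<^sub>v G i"
    using Eop_mult[OF G, of "{i}" F G] F G a by (auto intro!: eq_vecI)
  ultimately show "eigenvalue (E_op n {i} F G) l" using G
    unfolding eigenvalue_def eigenvector_def by (auto simp: E_op_def)
qed

lemma Eop_pair: assumes v: "v \<in> carrier_vec n" and c: "F i \<in> carrier_vec n" "F j \<in> carrier_vec n"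
   "G i \<in> carrier_vec n" "G j \<in> carrier_vec n" and ij: "i \<noteq> j"
  shows "E_op n {i,j} F G *\<^sub>v v = ip v (F i) \<cdot>\<^sub>v G i + ip v (F j) \<cdot>\<^sub>v G j"
  by (subst Eop_mult[OF v]) (use c ij in \<open>auto intro!: eq_vecI\<close>)

lemma eig_pair: assumes ij: "i \<noteq> j" and c: "F i \<in> carrier_vec n" "F j \<in> carrier_vec n"
   "G i \<in> carrier_vec n" "G j \<in> carrier_vec n"
  and ci: "ip (G i) (F i) = cc" and cj: "ip (G j) (F j) = cc" and l: "l \<noteq> 0"
  shows "eigenvalue (E_op n {i,j} F G) l \<longleftrightarrow> (l - cc)^2 = ip (G j) (F i) * ip (G i) (F j)"
proof -
  define x where "x = ip (G j) (F i)"
  define y where "y = ip (G i) (F j)"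
  have ipw: "ip (p \<cdot>\<^sub>v G i + q \<cdot>\<^sub>v G j) (F i) = p * cc + q * x"
     "ip (p \<cdot>\<^sub>v G i + q \<cdot>\<^sub>v G j) (F j) = p * y + q * cc" for p q
    using c ci cj by (simp_all add: ip_add[of _ n] ip_smult[of _ n] x_def y_def)
  show ?thesis unfolding x_def[symmetric] y_def[symmetric]
  proof
    assume "eigenvalue (E_op n {i,j} F G) l"
    then obtain v where v: "v \<in> carrier_vec n" "v \<noteq> 0\<^sub>v n" "E_op n {i,j} F G *\<^sub>v v = l \<cdot>\<^sub>v v"
      unfolding eigenvalue_def eigenvector_def by (auto simp: E_op_def)
    define p where "p = ip v (F i)"
    define q where "q = ip v (F j)"
    have eq: "p \<cdot>\<^sub>v G i + q \<cdot>\<^sub>v G j = l \<cdot>\<^sub>v v" using v(3) Eop_pair[OF v(1) c ij] p_def q_def by simp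
    have e1: "l * p = p * cc + q * x" using arg_cong[OF eq, of "\<lambda>w. ip w (F i)"] ipw ip_smult[OF v(1)] p_def by metis
    have e2: "l * q = p * y + q * cc" using arg_cong[OF eq, of "\<lambda>w. ip w (F j)"] ipw ip_smult[OF v(1)] q_def by metis
    have pq: "p \<noteq> 0 \<or> q \<noteq> 0"
    proof (rule ccontr)
      assume "\<not> (p \<noteq> 0 \<or> q \<noteq> 0)"
      hence pq0: "p = 0" "q = 0" by auto
      have z: "0 \<cdot>\<^sub>v G i + 0 \<cdot>\<^sub>v G j = 0\<^sub>v n" using c by (auto intro!: eq_vecI)
      have "l \<cdot>\<^sub>v v = 0\<^sub>v n" using eq z pq0 by simp
      hence "\<And>k. k < n \<Longrightarrow> l * v $ k = 0" by (metis index_smult_vec(1) index_zero_vec(1) v(1) carrier_vecD)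
      hence "v = 0\<^sub>v n" using l v(1) by (auto intro!: eq_vecI)
      thus False using v by auto
    qed
    have f1: "(l - cc) * p = q * x" using e1 by (simp add: algebra_simps)
    have f2: "(l - cc) * q = p * y" using e2 by (simp add: algebra_simps)
    have "(l - cc)^2 * p = (l - cc) * ((l - cc) * p)" by (simp add: power2_eq_square)
    also have "\<dots> = x * ((l - cc) * q)" unfolding f1 by (simp add: algebra_simps)
    also have "\<dots> = x * y * p" unfolding f2 by (simp add: algebra_simps)
    finally have P: "((l - cc)^2 - x * y) * p = 0" by (simp add: algebra_simps)
    have "(l - cc)^2 * q = (l - cc) * ((l - cc) * q)" by (simp add: power2_eq_square)
    also have "\<dots> = y * ((l - cc) * p)" unfolding f2 by (simp add: algebra_simps)
    also have "\<dots> = x * y * q" unfolding f1 by (simp add: algebra_simps)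
    finally have Q: "((l - cc)^2 - x * y) * q = 0" by (simp add: algebra_simps)
    from P Q show "(l - cc)^2 = x * y" using pq by auto
  next
    assume a: "(l - cc)^2 = x * y"
    obtain p q where pq: "p \<noteq> 0 \<or> q \<noteq> 0" "(l - cc) * p = q * x" "(l - cc) * q = p * y"
    proof (cases "x = 0")
      case True
      hence "l = cc" using a by simp
      thus ?thesis using that[of 0 1] True by simp
    next
      case False
      thus ?thesis using that[of x "l - cc"] a by (simp add: power2_eq_square algebra_simps)
    qed
    define w where "w = p \<cdot>\<^sub>v G i + q \<cdot>\<^sub>v G j"
    have w: "w \<in> carrier_vec n" using c w_def by auto
    have wi: "ip w (F i) = l * p" using ipw pq w_def by (simp add: algebra_simps)
    have wj: "ip w (F j) = l * q" using ipw pq w_def by (simp add: algebra_simps)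
    have Ew: "E_op n {i,j} F G *\<^sub>v w = l \<cdot>\<^sub>v w"
    proof -
      have "E_op n {i,j} F G *\<^sub>v w = ip w (F i) \<cdot>\<^sub>v G i + ip w (F j) \<cdot>\<^sub>v G j" by (rule Eop_pair[OF w c ij])
      also have "\<dots> = l \<cdot>\<^sub>v w" unfolding wi wj unfolding w_def using c by (auto intro!: eq_vecI simp: algebra_simps)
      finally show ?thesis .
    qed
    have "w \<noteq> 0\<^sub>v n"
    proof
      assume "w = 0\<^sub>v n"
      hence "l * p = 0" "l * q = 0" using wi wj ip_zero by metis+
      thus False using l pq by auto
    qed
    thus "eigenvalue (E_op n {i,j} F G) l" using w Ew
      unfolding eigenvalue_def eigenvector_def by (auto simp: E_op_def)
  qed
qed

lemma ip_unit: "ip (unit_vec n l) g = (if l < n then cnj (g $ l) else 0)"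
proof -
  have "ip (unit_vec n l) g = (\<Sum>k<n. if k = l then cnj (g $ k) else 0)"
    unfolding ip_def by (intro sum.cong) (auto simp: unit_vec_def)
  thus ?thesis by (simp add: sum.delta)
qed

lemma dual_comp: assumes d: "dual_pair n N F G" and k: "k < n" and l: "l < n"
  shows "(\<Sum>i<N. F i $ k * cnj (G i $ l)) = (if k = l then 1 else 0)"
proof -
  have Fc: "\<forall>i<N. F i \<in> carrier_vec n" using d by (simp add: dual_pair_def is_frame_def)
  have "unit_vec n l = finsum_vec TYPE(complex) n (\<lambda>i. ip (unit_vec n l) (G i) \<cdot>\<^sub>v F i) {..<N}"
    using d l unfolding dual_pair_def by auto
  hence "unit_vec n l $ k = finsum_vec TYPE(complex) n (\<lambda>i. ip (unit_vec n l) (G i) \<cdot>\<^sub>v F i) {..<N} $ k"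
    by simp
  also have "\<dots> = (\<Sum>i<N. (ip (unit_vec n l) (G i) \<cdot>\<^sub>v F i) $ k)"
    by (rule index_finsum_vec) (use k Fc in auto)
  also have "\<dots> = (\<Sum>i<N. F i $ k * cnj (G i $ l))"
    using Fc k l by (intro sum.cong) (auto simp: ip_unit)
  finally show ?thesis using k l by simp
qed

lemma trace1: assumes d: "dual_pair n N F G"
  shows "(\<Sum>i<N. ip (F i) (G i)) = of_nat n"
proof -
  have Fc: "\<forall>i<N. F i \<in> carrier_vec n" using d by (simp add: dual_pair_def is_frame_def)
  have "(\<Sum>i<N. ip (F i) (G i)) = (\<Sum>i<N. \<Sum>k<n. F i $ k * cnj (G i $ k))"
    using Fc by (intro sum.cong) (auto simp: ip_def)
  also have "\<dots> = (\<Sum>k<n. \<Sum>i<N. F i $ k * cnj (G i $ k))" by (rule sum.swap)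
  also have "\<dots> = (\<Sum>k<n. 1)" by (intro sum.cong) (auto simp: dual_comp[OF d])
  finally show ?thesis by simp
qed

lemma trace2: assumes d: "dual_pair n N F G"
  shows "(\<Sum>i<N. \<Sum>j<N. ip (F i) (G j) * ip (F j) (G i)) = of_nat n"
proof -
  have Fc: "\<forall>i<N. F i \<in> carrier_vec n" using d by (simp add: dual_pair_def is_frame_def)
  have dim: "\<And>i. i < N \<Longrightarrow> dim_vec (F i) = n" using Fc by auto
  define D where "D k l = (\<Sum>i<N. F i $ k * cnj (G i $ l))" for k l
  have "(\<Sum>i<N. \<Sum>j<N. ip (F i) (G j) * ip (F j) (G i)) =
        (\<Sum>i<N. \<Sum>j<N. (\<Sum>k<n. F i $ k * cnj (G j $ k)) * (\<Sum>l<n. F j $ l * cnj (G i $ l)))"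
    using Fc by (intro sum.cong refl) (simp add: ip_def dim)
  also have "\<dots> = (\<Sum>i<N. \<Sum>j<N. \<Sum>k<n. \<Sum>l<n. (F i $ k * cnj (G i $ l)) * (F j $ l * cnj (G j $ k)))"
    by (simp add: sum_product algebra_simps)
  also have "\<dots> = (\<Sum>i<N. \<Sum>k<n. \<Sum>j<N. \<Sum>l<n. (F i $ k * cnj (G i $ l)) * (F j $ l * cnj (G j $ k)))"
    by (intro sum.cong refl sum.swap)
  also have "\<dots> = (\<Sum>i<N. \<Sum>k<n. \<Sum>l<n. \<Sum>j<N. (F i $ k * cnj (G i $ l)) * (F j $ l * cnj (G j $ k)))"
    by (intro sum.cong refl sum.swap)
  also have "\<dots> = (\<Sum>k<n. \<Sum>i<N. \<Sum>l<n. \<Sum>j<N. (F i $ k * cnj (G i $ l)) * (F j $ l * cnj (G j $ k)))"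
    by (rule sum.swap)
  also have "\<dots> = (\<Sum>k<n. \<Sum>l<n. \<Sum>i<N. \<Sum>j<N. (F i $ k * cnj (G i $ l)) * (F j $ l * cnj (G j $ k)))"
    by (intro sum.cong refl sum.swap)
  also have "\<dots> = (\<Sum>k<n. \<Sum>l<n. D k l * D l k)"
    by (simp add: D_def sum_product)
  also have "\<dots> = (\<Sum>k<n. \<Sum>l<n. if k = l then 1 else 0)"
    unfolding D_def by (intro sum.cong refl) (auto simp: dual_comp[OF d])
  finally show ?thesis by simp
qed

lemma sr_single: assumes n: "n > 0" and F: "F i \<in> carrier_vec n" and G: "G i \<in> carrier_vec n"
  shows "spectral_radius (E_op n {i} F G) = cmod (ip (G i) (F i))"
proof -
  have "spectral_radius (E_op n {i} F G) = Max (norm ` insert 0 {ip (G i) (F i)})"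
    by (rule sr_char[OF Eop_carrier n]) (use eig_single[of F i n G, OF F G] in auto)
  thus ?thesis by simp
qed

lemma subsets1: "subsets_m N 1 = (\<lambda>i. {i}) ` {..<N}"
  by (auto simp: subsets_m_def card_1_singleton_iff)

lemma r1_formula: assumes n: "n > 0" and c: "\<And>i. i < N \<Longrightarrow> F i \<in> carrier_vec n \<and> G i \<in> carrier_vec n"
  shows "r_m 1 n N F G = Max ((\<lambda>i. cmod (ip (G i) (F i))) ` {..<N})"
proof -
  have "r_m 1 n N F G = Max ((\<lambda>i. spectral_radius (E_op n {i} F G)) ` {..<N})"
    unfolding r_m_def subsets1 image_image ..
  also have "(\<lambda>i. spectral_radius (E_op n {i} F G)) ` {..<N} = (\<lambda>i. cmod (ip (G i) (F i))) ` {..<N}"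
    by (intro image_cong refl) (use c sr_single[OF n] in auto)
  finally show ?thesis .
qed

lemma ip_cnj: "dim_vec f = dim_vec g \<Longrightarrow> ip g f = cnj (ip f g)"
  unfolding ip_def by (simp add: mult.commute)

lemma dual_carr: "dual_pair n N F G \<Longrightarrow> i < N \<Longrightarrow> F i \<in> carrier_vec n \<and> G i \<in> carrier_vec n"
  by (simp add: dual_pair_def is_frame_def)

lemma r1_lower: assumes d: "dual_pair n N F G" and n: "n > 0" and N: "N > 0"
  shows "real n / real N \<le> r_m 1 n N F G"
proof -
  define r where "r = r_m 1 n N F G"
  have r: "r = Max ((\<lambda>i. cmod (ip (G i) (F i))) ` {..<N})" unfolding r_def
    by (rule r1_formula[OF n]) (use dual_carr[OF d] in auto)
  have le: "cmod (ip (F i) (G i)) \<le> r" if "i < N" for i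
  proof -
    have "cmod (ip (F i) (G i)) = cmod (ip (G i) (F i))"
    proof -
      have "ip (G i) (F i) = cnj (ip (F i) (G i))" using dual_carr[OF d that] by (intro ip_cnj) auto
      thus ?thesis by simp
    qed
    also have "\<dots> \<le> r" unfolding r using that by (intro Max_ge) auto
    finally show ?thesis .
  qed
  have "real n = cmod (\<Sum>i<N. ip (F i) (G i))" unfolding trace1[OF d] by simp
  also have "\<dots> \<le> (\<Sum>i<N. cmod (ip (F i) (G i)))" by (rule norm_sum)
  also have "\<dots> \<le> (\<Sum>i<N. r)" by (intro sum_mono le) auto
  finally have "real n \<le> real N * r" by simp
  thus ?thesis unfolding r_def[symmetric] using N by (simp add: field_simps)
qed

lemma r1_inf_val: assumes n: "0 < n" "n \<le> N"
  shows "r1_inf n N = real n / real N"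
  unfolding r1_inf_def
proof (rule cInf_eq_minimum)
  have N: "N > 0" using n by auto
  let ?P = "\<lambda>i. vec n (phi N i)"
  have "r_m 1 n N ?P ?P = Max ((\<lambda>i. cmod (ip (?P i) (?P i))) ` {..<N})"
    by (rule r1_formula[OF n(1)]) auto
  also have "(\<lambda>i. cmod (ip (?P i) (?P i))) ` {..<N} = {real n / real N}"
    using N phi_diag[OF n(2) N] by (auto simp: norm_divide)
  finally have "r_m 1 n N ?P ?P = real n / real N" by simp
  hence "\<exists>F G. real n / real N = r_m 1 n N F G \<and> dual_pair n N F G"
    using phi_dual[OF n(2)] by metis
  thus "real n / real N \<in> {r_m 1 n N F G |F G. dual_pair n N F G}" by simp
  fix x assume "x \<in> {r_m 1 n N F G |F G. dual_pair n N F G}"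
  thus "real n / real N \<le> x" using r1_lower n N by blast
qed

lemma R1_diag: assumes R: "(F, G) \<in> R1 n N" and n: "0 < n" "n \<le> N" and i: "i < N"
  shows "ip (F i) (G i) = of_real (real n / real N)"
proof -
  have N: "N > 0" using n by auto
  have d: "dual_pair n N F G" and rr: "r_m 1 n N F G = real n / real N"
    using R r1_inf_val[OF n] by (auto simp: R1_def)
  define c where "c = real n / real N"
  have r: "r_m 1 n N F G = Max ((\<lambda>i. cmod (ip (G i) (F i))) ` {..<N})"
    by (rule r1_formula[OF n(1)]) (use dual_carr[OF d] in auto)
  have le: "cmod (ip (F i) (G i)) \<le> c" if "i < N" for i
  proof -
    have "cmod (ip (F i) (G i)) = cmod (ip (G i) (F i))"
    proof -
      have "ip (G i) (F i) = cnj (ip (F i) (G i))" using dual_carr[OF d that] by (intro ip_cnj) auto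
      thus ?thesis by simp
    qed
    also have "\<dots> \<le> r_m 1 n N F G" unfolding r using that by (intro Max_ge) auto
    finally show ?thesis using rr c_def by simp
  qed
  have rele: "Re (ip (F i) (G i)) \<le> c" if "i < N" for i
    using le[OF that] complex_Re_le_cmod order_trans by blast
  have "(\<Sum>i<N. Re (ip (F i) (G i))) = real n"
    using arg_cong[OF trace1[OF d], of Re] by (simp add: Re_sum)
  hence "(\<Sum>i<N. c - Re (ip (F i) (G i))) = 0" using N by (simp add: sum_subtractf c_def)
  hence "\<forall>i\<in>{..<N}. c - Re (ip (F i) (G i)) = 0"
    by (subst sum_nonneg_eq_0_iff[symmetric]) (use rele in auto)
  hence re: "Re (ip (F i) (G i)) = c" using i by auto
  have "(cmod (ip (F i) (G i)))^2 = (Re (ip (F i) (G i)))^2 + (Im (ip (F i) (G i)))^2"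
    by (simp add: cmod_power2)
  moreover have "(cmod (ip (F i) (G i)))^2 \<le> c^2"
    using le[OF i] by (simp add: power_mono)
  ultimately have "Im (ip (F i) (G i)) = 0" using re by simp
  thus ?thesis using re c_def by (simp add: complex_eq_iff)
qed

lemma sr_pair: assumes n: "n > 0" and ij: "i \<noteq> j" and c: "F i \<in> carrier_vec n" "F j \<in> carrier_vec n"
   "G i \<in> carrier_vec n" "G j \<in> carrier_vec n"
  and ci: "ip (G i) (F i) = cc" and cj: "ip (G j) (F j) = cc"
  and s: "s^2 = ip (G j) (F i) * ip (G i) (F j)"
  shows "spectral_radius (E_op n {i,j} F G) = max (cmod (cc + s)) (cmod (cc - s))"
proof -
  have "spectral_radius (E_op n {i,j} F G) = Max (norm ` insert 0 {cc + s, cc - s})"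
  proof (rule sr_char[OF Eop_carrier n])
    fix l :: complex assume l: "l \<noteq> 0"
    have "(l - cc)^2 = s^2 \<longleftrightarrow> (l - cc - s) * (l - cc + s) = 0"
      by (simp add: power2_eq_square algebra_simps)
    also have "\<dots> \<longleftrightarrow> l - cc - s = 0 \<or> l - cc + s = 0" by simp
    also have "\<dots> \<longleftrightarrow> l \<in> {cc + s, cc - s}"
    proof -
      have "l - cc - s = 0 \<longleftrightarrow> l = cc + s" by (simp add: algebra_simps)
      moreover have "l - cc + s = 0 \<longleftrightarrow> l = cc - s" by (simp add: algebra_simps)
      ultimately show ?thesis by blast
    qed
    finally show "eigenvalue (E_op n {i, j} F G) l \<longleftrightarrow> l \<in> {cc + s, cc - s}"
      using eig_pair[OF ij c ci cj l] s by simp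
  qed simp
  moreover have "max 0 (max (cmod (cc + s)) (cmod (cc - s))) = max (cmod (cc + s)) (cmod (cc - s))"
    by (simp add: max_def)
  ultimately show ?thesis by simp
qed

lemma key_bound: fixes c t :: real and s :: complex
  assumes c: "c > 0" and t: "t \<ge> 0" and m: "max (cmod (of_real c + s)) (cmod (of_real c - s)) \<le> c + t"
  shows "Re (s^2) \<le> t^2" "Re (s^2) = t^2 \<Longrightarrow> s^2 = of_real (t^2)"
proof -
  define a where "a = Re s"
  define b where "b = Im s"
  have p: "(cmod (of_real c + s))^2 = (c + a)^2 + b^2" "(cmod (of_real c - s))^2 = (c - a)^2 + b^2"
    by (simp_all add: cmod_power2 a_def b_def)
  have m1: "(cmod (of_real c + s))^2 \<le> (c + t)^2" using m by (intro power_mono[OF _ norm_ge_zero]) simp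
  have m2: "(cmod (of_real c - s))^2 \<le> (c + t)^2" using m by (intro power_mono[OF _ norm_ge_zero]) simp
  have at: "\<bar>a\<bar> \<le> t"
  proof (cases "a \<ge> 0")
    case True
    have sqa: "(c + a)^2 \<le> (c + t)^2" using m1 p zero_le_power2[of b] by linarith
    have "c + a \<le> c + t" using power2_le_imp_le[OF sqa] c t by linarith
    thus ?thesis using True by simp
  next
    case False
    have sqa: "(c - a)^2 \<le> (c + t)^2" using m2 p zero_le_power2[of b] by linarith
    have "c - a \<le> c + t" using power2_le_imp_le[OF sqa] c t by linarith
    thus ?thesis using False by simp
  qed
  have a2: "a^2 \<le> t^2" using power_mono[OF at abs_ge_zero, of 2] by simp
  have re: "Re (s^2) = a^2 - b^2" by (simp add: power2_eq_square a_def b_def)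
  show "Re (s^2) \<le> t^2" using re a2 zero_le_power2[of b] by linarith
  assume eq: "Re (s^2) = t^2"
  hence "b^2 = 0" using re a2 zero_le_power2[of b] by linarith
  hence b0: "b = 0" by simp
  have "Im (s^2) = 2 * a * b" by (simp add: power2_eq_square a_def b_def)
  thus "s^2 = of_real (t^2)" using eq b0 by (simp add: complex_eq_iff)
qed

lemma max_t: fixes c t :: real assumes "c > 0" "t \<ge> 0"
  shows "max (cmod (of_real c + of_real t)) (cmod (of_real c - of_real t)) = c + t"
proof -
  have "cmod (of_real c + of_real t) = c + t" using assms
    by (metis abs_of_nonneg add_nonneg_nonneg less_imp_le norm_of_real of_real_add)
  moreover have "cmod (of_real c - of_real t) = \<bar>c - t\<bar>" by (metis norm_of_real of_real_diff)
  ultimately show ?thesis using assms by auto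
qed

lemma sub2: "\<Lambda> \<in> subsets_m N 2 \<longleftrightarrow> (\<exists>i j. i < N \<and> j < N \<and> i \<noteq> j \<and> \<Lambda> = {i,j})"
  unfolding subsets_m_def by (auto simp: card_2_iff)

lemma sub2_fin: "finite (subsets_m N 2)"
proof -
  have "subsets_m N 2 \<subseteq> Pow {..<N}" unfolding subsets_m_def by auto
  thus ?thesis by (rule finite_subset) auto
qed

theorem mainTheorem12:
  fixes n N :: nat and F G :: "nat \<Rightarrow> complex vec"
  assumes "0 < n" and "n < N"
    and "(F, G) \<in> R1 n N"
  shows "r_m 2 n N F G = real n / real N + sqrt (real n * (real N - real n) / ((real N)\<^sup>2 * (real N - 1)))
         \<longleftrightarrow> two_uniform N F G"
proof -
  note n = assms(1) and nN = assms(2) and R = assms(3)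
  have N2: "N \<ge> 2" using n nN by auto
  have d: "dual_pair n N F G" using R by (simp add: R1_def)
  have carr: "\<And>i. i < N \<Longrightarrow> F i \<in> carrier_vec n \<and> G i \<in> carrier_vec n" using dual_carr[OF d] by auto
  define c where "c = real n / real N"
  define t where "t = sqrt (real n * (real N - real n) / ((real N)\<^sup>2 * (real N - 1)))"
  have c0: "c > 0" using n nN by (simp add: c_def)
  have t0: "t \<ge> 0" using nN by (simp add: t_def)
  have diag: "\<And>i. i < N \<Longrightarrow> ip (F i) (G i) = of_real c"
    using R1_diag[OF R n] nN c_def by auto
  have diag': "\<And>i. i < N \<Longrightarrow> ip (G i) (F i) = of_real c"
  proof -
    fix i assume i: "i < N"
    have "ip (G i) (F i) = cnj (ip (F i) (G i))" using carr[OF i] by (intro ip_cnj) auto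
    thus "ip (G i) (F i) = of_real c" using diag[OF i] by simp
  qed
  define dd where "dd i j = ip (F i) (G j) * ip (F j) (G i)" for i j
  have prod: "ip (G j) (F i) * ip (G i) (F j) = cnj (dd i j)" if "i < N" "j < N" for i j
  proof -
    have "ip (G j) (F i) = cnj (ip (F i) (G j))" using carr[OF that(1)] carr[OF that(2)] by (intro ip_cnj) (auto simp: carrier_vecD)
    moreover have "ip (G i) (F j) = cnj (ip (F j) (G i))" using carr[OF that(1)] carr[OF that(2)] by (intro ip_cnj) (auto simp: carrier_vecD)
    ultimately show ?thesis by (simp add: dd_def)
  qed
  define rho where "rho \<Lambda> = spectral_radius (E_op n \<Lambda> F G)" for \<Lambda>
  have rho: "rho {i,j} = max (cmod (of_real c + s)) (cmod (of_real c - s))"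
    if ij: "i < N" "j < N" "i \<noteq> j" and s: "s^2 = cnj (dd i j)" for i j s
    unfolding rho_def
    by (rule sr_pair[OF n ij(3)]) (use carr[OF ij(1)] carr[OF ij(2)] diag' ij s prod in auto)
  have r2: "r_m 2 n N F G = Max (rho ` subsets_m N 2)" unfolding r_m_def rho_def ..
  have "{0,1} \<in> subsets_m N 2" unfolding sub2 using N2 by (intro exI[of _ 0] exI[of _ 1]) auto
  hence ne: "subsets_m N 2 \<noteq> {}" by auto
  have tt: "t^2 = real n * (real N - real n) / ((real N)\<^sup>2 * (real N - 1))"
    unfolding t_def using nN by (intro real_sqrt_pow2) auto
  have S: "(\<Sum>i<N. \<Sum>j\<in>{..<N} - {i}. dd i j) = of_real (real N * (real N - 1) * t^2)"
  proof -
    have "(\<Sum>i<N. \<Sum>j<N. dd i j) = of_nat n" using trace2[OF d] by (simp add: dd_def)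
    moreover have "(\<Sum>j<N. dd i j) = of_real (c^2) + (\<Sum>j\<in>{..<N} - {i}. dd i j)" if "i < N" for i
    proof -
      have "(\<Sum>j<N. dd i j) = dd i i + (\<Sum>j\<in>{..<N} - {i}. dd i j)"
        using that by (subst sum.remove[of _ i]) auto
      thus ?thesis using diag[OF that] by (simp add: dd_def power2_eq_square)
    qed
    ultimately have "of_nat n = (\<Sum>i<N. of_real (c^2) + (\<Sum>j\<in>{..<N} - {i}. dd i j))" by simp
    also have "\<dots> = of_real (real N * c^2) + (\<Sum>i<N. \<Sum>j\<in>{..<N} - {i}. dd i j)"
      by (simp add: sum.distrib)
    finally have "(\<Sum>i<N. \<Sum>j\<in>{..<N} - {i}. dd i j) = of_real (real n - real N * c^2)" by simp
    also have "real n - real N * c^2 = real N * (real N - 1) * t^2"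
      unfolding tt c_def using N2 by (simp add: field_simps power2_eq_square)
    finally show ?thesis .
  qed
  have cardm: "card ({..<N} - {i}) = N - 1" if "i < N" for i using that by simp
  show ?thesis unfolding c_def[symmetric] t_def[symmetric]
  proof
    assume eq: "r_m 2 n N F G = c + t"
    have le: "Re (dd i j) \<le> t^2 \<and> (Re (dd i j) = t^2 \<longrightarrow> dd i j = of_real (t^2))"
      if ij: "i < N" "j < N" "i \<noteq> j" for i j
    proof -
      define s where "s = csqrt (cnj (dd i j))"
      have s2: "s^2 = cnj (dd i j)" by (simp add: s_def)
      have "rho {i,j} \<le> c + t" unfolding eq[symmetric] r2
      proof (rule Max_ge)
        have "{i,j} \<in> subsets_m N 2" unfolding sub2 using ij by blast
        thus "rho {i,j} \<in> rho ` subsets_m N 2" by blast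
      qed (use sub2_fin in auto)
      hence m: "max (cmod (of_real c + s)) (cmod (of_real c - s)) \<le> c + t" using rho[OF ij s2] by simp
      have re: "Re (dd i j) = Re (s^2)" using s2 by simp
      have dds: "dd i j = cnj (s^2)" using s2 by simp
      note kb = key_bound[OF c0 t0 m]
      show ?thesis
      proof
        show "Re (dd i j) \<le> t^2" using re kb(1) by linarith
        show "Re (dd i j) = t^2 \<longrightarrow> dd i j = of_real (t^2)"
        proof
          assume "Re (dd i j) = t^2"
          hence "s^2 = of_real (t^2)" using re kb(2) by linarith
          thus "dd i j = of_real (t^2)" using dds by (metis complex_cnj_complex_of_real)
        qed
      qed
    qed
    have nn: "0 \<le> t^2 - Re (dd i j)" if "i < N" "j \<in> {..<N} - {i}" for i j
    proof -
      have "j < N" "i \<noteq> j" using that by auto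
      thus ?thesis using le[OF that(1)] by auto
    qed
    have "(\<Sum>i<N. \<Sum>j\<in>{..<N} - {i}. t^2 - Re (dd i j)) = 0"
    proof -
      have "(\<Sum>i<N. \<Sum>j\<in>{..<N} - {i}. Re (dd i j)) = real N * (real N - 1) * t^2"
        using arg_cong[OF S, of Re] by (simp add: Re_sum)
      moreover have "(\<Sum>i<N. \<Sum>j\<in>{..<N} - {i}. t^2) = real N * (real N - 1) * t^2"
        using cardm N2 by (simp add: of_nat_diff)
      ultimately show ?thesis by (simp add: sum_subtractf)
    qed
    hence z: "\<forall>i\<in>{..<N}. (\<Sum>j\<in>{..<N} - {i}. t^2 - Re (dd i j)) = 0"
      by (subst (asm) sum_nonneg_eq_0_iff) (auto intro!: sum_nonneg nn)
    have "dd i j = of_real (t^2)" if ij: "i < N" "j < N" "i \<noteq> j" for i j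
    proof -
      have "\<forall>j\<in>{..<N} - {i}. t^2 - Re (dd i j) = 0"
      proof (subst sum_nonneg_eq_0_iff[symmetric])
        show "(\<Sum>j\<in>{..<N} - {i}. t^2 - Re (dd i j)) = 0" using z ij by auto
      qed (use nn ij in auto)
      moreover have "j \<in> {..<N} - {i}" using ij by auto
      ultimately have "t^2 - Re (dd i j) = 0" by (rule bspec)
      hence "Re (dd i j) = t^2" by simp
      thus ?thesis using le[OF ij] by auto
    qed
    thus "two_uniform N F G" unfolding two_uniform_def one_uniform_def dd_def using diag by blast
  next
    assume tu: "two_uniform N F G"
    then obtain d0 where d0: "\<And>i j. i < N \<Longrightarrow> j < N \<Longrightarrow> i \<noteq> j \<Longrightarrow> dd i j = d0"
      unfolding two_uniform_def dd_def by blast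
    have "(\<Sum>i<N. \<Sum>j\<in>{..<N} - {i}. dd i j) = (\<Sum>i<N. \<Sum>j\<in>{..<N} - {i}. d0)"
      using d0 by (intro sum.cong refl) auto
    also have "\<dots> = (\<Sum>i<N. of_nat (N - 1) * d0)" using cardm by (intro sum.cong refl) simp
    also have "\<dots> = of_nat N * (of_nat (N - 1) * d0)" by (simp only: sum_constant card_lessThan)
    finally have e0: "(\<Sum>i<N. \<Sum>j\<in>{..<N} - {i}. dd i j) = of_nat N * (of_nat (N - 1) * d0)" .
    have e1: "of_nat N * (of_nat (N - 1) * d0) = complex_of_real (real N * (real N - 1) * t^2)"
      by (rule trans[OF e0[symmetric] S])
    have e2: "complex_of_real (real N * (real N - 1) * t^2) = of_nat N * (of_nat (N - 1) * of_real (t^2))"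
      using N2 by (simp add: of_nat_diff)
    have nz: "(of_nat N :: complex) \<noteq> 0" "(of_nat (N - 1) :: complex) \<noteq> 0" using N2 by auto
    have "of_nat N * (of_nat (N - 1) * d0) = of_nat N * (of_nat (N - 1) * (of_real (t^2) :: complex))"
      by (rule trans[OF e1 e2])
    hence "of_nat (N - 1) * d0 = of_nat (N - 1) * (of_real (t^2) :: complex)"
      by (rule mult_left_cancel[OF nz(1), THEN iffD1])
    hence dv: "d0 = of_real (t^2)" by (rule mult_left_cancel[OF nz(2), THEN iffD1])
    have all: "rho \<Lambda> = c + t" if L: "\<Lambda> \<in> subsets_m N 2" for \<Lambda>
    proof -
      obtain i j where ij: "i < N" "j < N" "i \<noteq> j" "\<Lambda> = {i,j}" using L unfolding sub2 by blast
      have "dd i j = of_real (t^2)" using d0[OF ij(1-3)] dv by (rule trans)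
      hence s2: "(of_real t)^2 = cnj (dd i j)" by simp
      show ?thesis unfolding ij(4) rho[OF ij(1-3) s2] by (rule max_t[OF c0 t0])
    qed
    have "rho ` subsets_m N 2 = {c + t}"
    proof
      show "rho ` subsets_m N 2 \<subseteq> {c + t}" using all by auto
      obtain L0 where "L0 \<in> subsets_m N 2" using ne by auto
      thus "{c + t} \<subseteq> rho ` subsets_m N 2" using all[of L0] by (metis empty_subsetI image_eqI insert_subset)
    qed
    thus "r_m 2 n N F G = c + t" unfolding r2 by simp
  qed
qed

end
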